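(* Let $A$ be a configuration of at least $3$ pairwise distinct points in $\mathbb{R}^2$ and let $a\in A$. If the points of $A\setminus\{a\}$ are not all contained in a common line, then there is a line $L$ such that $|L\cap A|=2$ and $a\notin L$. *)

theory Defs
  imports "HOL-Analysis.Analysis"
begin

definition is_line :: "(real ^ 2) set \<Rightarrow> bool" where
  "is_line L \<longleftrightarrow> (\<exists>p q. p \<noteq> q \<and> L = affine hull {p, q})"

end

theory Submission
  imports Defs
begin

lemma key_alg:
  fixes K m b hh x0 x1 x2 y0 y1 y2 :: real
  assumes K: "K > 0" and hh: "hh \<noteq> 0" and u: "x2 \<noteq> x0" and w: "x1 \<noteq> x2"
    and e0: "y0 = m*x0+b+hh" and e1: "y1 = m*x1+b" and e2: "y2 = m*x2+b"
    and le: "\<bar>x1-x2\<bar> \<le> \<bar>x2 - (x0 + m*hh/(K+m\<^sup>2))\<bar>"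
  shows "y1 - y0 - (y2-y0)/(x2-x0)*(x1-x0) \<noteq> 0 \<and>
         (y1 - y0 - (y2-y0)/(x2-x0)*(x1-x0))\<^sup>2 / (K + ((y2-y0)/(x2-x0))\<^sup>2) < hh\<^sup>2/(K+m\<^sup>2)"
proof -
  define uu where "uu = x2 - x0"
  define ww where "ww = x1 - x2"
  have uu0: "uu \<noteq> 0" using u by (simp add: uu_def)
  have ww0: "ww \<noteq> 0" using w by (simp add: ww_def)
  have Km: "K + m\<^sup>2 > 0" using K by (simp add: add_pos_nonneg)
  have h': "y1 - y0 - (y2-y0)/(x2-x0)*(x1-x0) = hh * ww / uu"
    using uu0 unfolding uu_def ww_def e0 e1 e2 by (simp add: field_simps)
  have m': "(y2-y0)/(x2-x0) = m - hh/uu"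
    using uu0 unfolding uu_def e0 e2 by (simp add: field_simps)
  have D': "(hh * ww / uu)\<^sup>2 / (K + (m - hh/uu)\<^sup>2) = hh\<^sup>2 * ww\<^sup>2 / (K*uu\<^sup>2 + (m*uu - hh)\<^sup>2)"
    using uu0 by (simp add: field_simps power2_eq_square)
  define z where "z = uu - m*hh/(K+m\<^sup>2)"
  have zz: "z*(K+m\<^sup>2) = (K+m\<^sup>2)*uu - m*hh" using Km by (simp add: z_def field_simps)
  have ident: "(K+m\<^sup>2)*(K*uu\<^sup>2 + (m*uu - hh)\<^sup>2) = (z*(K+m\<^sup>2))\<^sup>2 + K*hh\<^sup>2"
    unfolding zz by (simp add: power2_eq_square algebra_simps)
  have wz: "ww\<^sup>2 \<le> z\<^sup>2" using le unfolding z_def uu_def ww_def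
    by (simp add: abs_le_square_iff algebra_simps)
  have pos: "K*hh\<^sup>2 > 0" using K hh by simp
  have "(K+m\<^sup>2)*(ww\<^sup>2 * (K+m\<^sup>2)) = ww\<^sup>2 * (K+m\<^sup>2)\<^sup>2" by (simp add: power2_eq_square)
  also have "\<dots> \<le> z\<^sup>2 * (K+m\<^sup>2)\<^sup>2" using wz by (simp add: mult_right_mono)
  also have "\<dots> < (z*(K+m\<^sup>2))\<^sup>2 + K*hh\<^sup>2" using pos by (simp add: power_mult_distrib)
  also have "\<dots> = (K+m\<^sup>2)*(K*uu\<^sup>2 + (m*uu - hh)\<^sup>2)" using ident by simp
  finally have ineq: "ww\<^sup>2 * (K+m\<^sup>2) < K*uu\<^sup>2 + (m*uu - hh)\<^sup>2"
    using Km mult_less_cancel_left_pos by blast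
  have den: "K*uu\<^sup>2 + (m*uu - hh)\<^sup>2 > 0" using K uu0 by (simp add: add_pos_nonneg)
  have h2: "hh\<^sup>2 > 0" using hh by simp
  have "hh\<^sup>2 * (ww\<^sup>2 * (K+m\<^sup>2)) < hh\<^sup>2 * (K*uu\<^sup>2 + (m*uu - hh)\<^sup>2)"
    using ineq h2 by simp
  hence "hh\<^sup>2 * ww\<^sup>2 / (K*uu\<^sup>2 + (m*uu - hh)\<^sup>2) < hh\<^sup>2/(K+m\<^sup>2)"
    using den Km by (simp add: divide_simps algebra_simps)
  thus ?thesis using h' m' D' hh ww0 uu0 by simp
qed

lemma pair_ok: fixes u v xf :: real
  assumes "(u-xf)*(v-xf) \<ge> 0" "\<bar>u-xf\<bar> \<le> \<bar>v-xf\<bar>" shows "\<bar>u-v\<bar> \<le> \<bar>v-xf\<bar>"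
  using assms by (cases "u \<ge> xf"; cases "v \<ge> xf") (auto simp: zero_le_mult_iff abs_if)

lemma pigeon3: fixes a1 a2 a3 xf :: real
  shows "(a1-xf)*(a2-xf) \<ge> 0 \<or> (a1-xf)*(a3-xf) \<ge> 0 \<or> (a2-xf)*(a3-xf) \<ge> 0"
  by (cases "a1 \<ge> xf"; cases "a2 \<ge> xf"; cases "a3 \<ge> xf") (auto simp: zero_le_mult_iff)

lemma select3:
  fixes a1 a2 a3 x0 xf d :: real
  assumes "d > 0"
    "a1 = x0 \<or> \<bar>a1 - x0\<bar> \<ge> d" "a2 = x0 \<or> \<bar>a2 - x0\<bar> \<ge> d" "a3 = x0 \<or> \<bar>a3 - x0\<bar> \<ge> d"
    "\<bar>xf - x0\<bar> < d/2"
    "a1 \<noteq> x0 \<or> a2 \<noteq> x0" "a1 \<noteq> x0 \<or> a3 \<noteq> x0" "a2 \<noteq> x0 \<or> a3 \<noteq> x0"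
  shows "(a2 \<noteq> x0 \<and> \<bar>a1-a2\<bar> \<le> \<bar>a2-xf\<bar>) \<or> (a3 \<noteq> x0 \<and> \<bar>a1-a3\<bar> \<le> \<bar>a3-xf\<bar>) \<or>
         (a1 \<noteq> x0 \<and> \<bar>a2-a1\<bar> \<le> \<bar>a1-xf\<bar>) \<or> (a3 \<noteq> x0 \<and> \<bar>a2-a3\<bar> \<le> \<bar>a3-xf\<bar>) \<or>
         (a1 \<noteq> x0 \<and> \<bar>a3-a1\<bar> \<le> \<bar>a1-xf\<bar>) \<or> (a2 \<noteq> x0 \<and> \<bar>a3-a2\<bar> \<le> \<bar>a2-xf\<bar>)"
proof -
  define ok where "ok u v \<longleftrightarrow> v \<noteq> x0 \<and> \<bar>u-v\<bar> \<le> \<bar>v-xf\<bar>" for u v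
  have far: "\<bar>u - xf\<bar> \<le> \<bar>v - xf\<bar>" if "u = x0" "v = x0 \<or> \<bar>v - x0\<bar> \<ge> d" for u v
    using that assms(1,5) by linarith
  have both: "ok u v \<or> ok v u" if "(u-xf)*(v-xf) \<ge> 0" "u \<noteq> x0 \<or> v \<noteq> x0"
      "u = x0 \<or> \<bar>u - x0\<bar> \<ge> d" "v = x0 \<or> \<bar>v - x0\<bar> \<ge> d" for u v
  proof (cases "u = x0")
    case True
    then have "v \<noteq> x0" using that by auto
    then show ?thesis using pair_ok[OF that(1) far[OF True that(4)]] unfolding ok_def by simp
  next
    case u: False
    show ?thesis
    proof (cases "v = x0")
      case True
      have "(v-xf)*(u-xf) \<ge> 0" using that(1) by (simp add: mult.commute)
      then show ?thesis using pair_ok[OF _ far[OF True that(3)]] u unfolding ok_def by (simp add: abs_minus_commute)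
    next
      case False
      show ?thesis
      proof (cases "\<bar>u-xf\<bar> \<le> \<bar>v-xf\<bar>")
        case True then show ?thesis using pair_ok[OF that(1) True] False unfolding ok_def by simp
      next
        case F2: False
        have vu: "(v-xf)*(u-xf) \<ge> 0" using that(1) by (simp add: mult.commute)
        show ?thesis using pair_ok[OF vu] F2 u unfolding ok_def by (simp add: abs_minus_commute)
      qed
    qed
  qed
  have "ok a1 a2 \<or> ok a2 a1 \<or> ok a1 a3 \<or> ok a3 a1 \<or> ok a2 a3 \<or> ok a3 a2"
    using pigeon3[of a1 xf a2 a3] both assms by blast
  then show ?thesis unfolding ok_def by auto
qed

definition slope :: "('a \<Rightarrow> real) \<Rightarrow> ('a \<Rightarrow> real) \<Rightarrow> 'a \<Rightarrow> 'a \<Rightarrow> real" where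
  "slope X Y p q = (Y q - Y p) / (X q - X p)"
definition hgt :: "('a \<Rightarrow> real) \<Rightarrow> ('a \<Rightarrow> real) \<Rightarrow> 'a \<Rightarrow> 'a \<Rightarrow> 'a \<Rightarrow> real" where
  "hgt X Y p q r = Y r - Y p - slope X Y p q * (X r - X p)"

lemma TL:
  fixes S :: "'a set" and X Y :: "'a \<Rightarrow> real"
  assumes fin: "finite S" and inj: "inj_on (\<lambda>p. (X p, Y p)) S"
    and ex: "\<exists>p\<in>S. \<exists>q\<in>S. \<exists>r\<in>S. X p \<noteq> X q \<and> hgt X Y p q r \<noteq> 0"
  shows "\<exists>p\<in>S. \<exists>q\<in>S. X p \<noteq> X q \<and> (\<forall>s\<in>S. hgt X Y p q s = 0 \<longrightarrow> s = p \<or> s = q)"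
proof -
  define P where "P = {(p,q,r). p\<in>S \<and> q\<in>S \<and> r\<in>S \<and> X p \<noteq> X q \<and> hgt X Y p q r \<noteq> 0}"
  have finP: "finite P"
    by (rule finite_subset[of _ "S \<times> S \<times> S"]) (auto simp: P_def fin)
  have neP: "P \<noteq> {}" using ex unfolding P_def by blast
  define Xd where "Xd = {\<bar>X u - X w\<bar> | u w. u\<in>S \<and> w\<in>S \<and> X u \<noteq> X w}"
  have finXd: "finite Xd"
  proof -
    have "Xd = (\<lambda>(u,w). \<bar>X u - X w\<bar>) ` {(u,w). u\<in>S \<and> w\<in>S \<and> X u \<noteq> X w}"
      unfolding Xd_def by auto
    moreover have "finite {(u,w). u\<in>S \<and> w\<in>S \<and> X u \<noteq> X w}"
      by (rule finite_subset[of _ "S \<times> S"]) (auto simp: fin)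
    ultimately show ?thesis by simp
  qed
  have neXd: "Xd \<noteq> {}" using ex unfolding Xd_def by blast
  define d where "d = Min Xd"
  have dpos: "d > 0"
    using Min_in[OF finXd neXd] unfolding d_def Xd_def by auto
  have dle: "d \<le> \<bar>X u - X w\<bar>" if "u\<in>S" "w\<in>S" "X u \<noteq> X w" for u w
    unfolding d_def by (rule Min_le[OF finXd]) (use that in \<open>auto simp: Xd_def\<close>)
  define F where "F = (\<lambda>(p,q,r). \<bar>slope X Y p q * hgt X Y p q r\<bar>)"
  define Mx where "Mx = Max (F ` P)"
  have Fle: "F t \<le> Mx" if "t \<in> P" for t
    unfolding Mx_def using finP that by simp
  have Mx0: "Mx \<ge> 0" using Fle neP unfolding F_def by fastforce
  define K where "K = 1 + 2*Mx/d"
  have Kpos: "K > 0" unfolding K_def using Mx0 dpos by (simp add: add_pos_nonneg)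
  define D where "D = (\<lambda>(p,q,r). (hgt X Y p q r)\<^sup>2 / (K + (slope X Y p q)\<^sup>2))"
  have "Min (D ` P) \<in> D ` P" using Min_in[of "D ` P"] finP neP by simp
  then obtain t where tP: "t \<in> P" and tmin: "D t = Min (D ` P)" by (metis imageE)
  have Dmin: "D t \<le> D t'" if "t' \<in> P" for t'
    using tmin finP that by simp
  obtain p q r where t: "t = (p,q,r)" by (cases t) auto
  have pS: "p\<in>S" and qS: "q\<in>S" and rS: "r\<in>S" and Xpq: "X p \<noteq> X q" and hr: "hgt X Y p q r \<noteq> 0"
    using tP unfolding t P_def by auto
  define m where "m = slope X Y p q"
  define b where "b = Y p - m * X p"
  define hh where "hh = hgt X Y p q r"
  have online: "Y z = m * X z + b" if "hgt X Y p q z = 0" for z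
    using that unfolding hgt_def m_def b_def by (simp add: algebra_simps)
  have hp: "hgt X Y p q p = 0" by (simp add: hgt_def)
  have hq: "hgt X Y p q q = 0" using Xpq by (simp add: hgt_def slope_def)
  have yr: "Y r = m * X r + b + hh" unfolding hh_def hgt_def m_def b_def by (simp add: algebra_simps)
  have Xinj: "z = z'" if "z\<in>S" "z'\<in>S" "hgt X Y p q z = 0" "hgt X Y p q z' = 0" "X z = X z'" for z z'
  proof -
    have "Y z = Y z'" using online[OF that(3)] online[OF that(4)] that(5) by simp
    then show ?thesis using inj that(1,2,5) unfolding inj_on_def by auto
  qed
  define xf where "xf = X r + m*hh/(K+m\<^sup>2)"
  have Km: "K + m\<^sup>2 \<ge> K" by simp
  have xfclose: "\<bar>xf - X r\<bar> < d/2"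
  proof -
    have "\<bar>m*hh\<bar> \<le> Mx" using Fle[OF tP] unfolding F_def t m_def hh_def by simp
    have "\<bar>xf - X r\<bar> = \<bar>m*hh\<bar>/(K+m\<^sup>2)" unfolding xf_def using Kpos
      by (simp add: abs_divide add_pos_nonneg)
    also have "\<dots> \<le> \<bar>m*hh\<bar>/K" using Kpos Km by (simp add: frac_le)
    also have "\<dots> \<le> Mx/K" using Kpos \<open>\<bar>m*hh\<bar> \<le> Mx\<close> by (simp add: divide_right_mono)
    also have "\<dots> < d/2"
    proof -
      have "Mx < d/2 * K" unfolding K_def using dpos Mx0 by (simp add: field_simps)
      then show ?thesis using Kpos by (simp add: divide_less_eq)
    qed
    finally show ?thesis .
  qed
  have step: False if t1S: "t1\<in>S" and t2S: "t2\<in>S" and h1: "hgt X Y p q t1 = 0" and h2: "hgt X Y p q t2 = 0"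
      and x12: "X t1 \<noteq> X t2" and x2r: "X t2 \<noteq> X r" and le: "\<bar>X t1 - X t2\<bar> \<le> \<bar>X t2 - xf\<bar>" for t1 t2
  proof -
    have k: "hgt X Y r t2 t1 \<noteq> 0 \<and> (hgt X Y r t2 t1)\<^sup>2 / (K + (slope X Y r t2)\<^sup>2) < hh\<^sup>2/(K+m\<^sup>2)"
      using key_alg[OF Kpos _ x2r x12 yr online[OF h1] online[OF h2]] hr le
      unfolding hgt_def[of X Y r t2 t1] slope_def[of X Y r t2] hh_def xf_def by simp
    have "(r,t2,t1) \<in> P" using k rS t1S t2S x2r unfolding P_def by auto
    from Dmin[OF this] k show False unfolding t D_def m_def hh_def by simp
  qed
  have "\<forall>s\<in>S. hgt X Y p q s = 0 \<longrightarrow> s = p \<or> s = q"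
  proof (intro ballI impI)
    fix s assume sS: "s\<in>S" and hs: "hgt X Y p q s = 0"
    show "s = p \<or> s = q"
    proof (rule ccontr)
      assume "\<not> (s = p \<or> s = q)"
      then have sp: "s \<noteq> p" and sq: "s \<noteq> q" by auto
      have Xsp: "X p \<noteq> X s" using Xinj[OF pS sS hp hs] sp by metis
      have Xsq: "X q \<noteq> X s" using Xinj[OF qS sS hq hs] sq by metis
      have near: "X z = X r \<or> \<bar>X z - X r\<bar> \<ge> d" if "z\<in>S" for z
        using dle[OF that rS] by auto
      have sel: "(X q \<noteq> X r \<and> \<bar>X p - X q\<bar> \<le> \<bar>X q - xf\<bar>) \<or> (X s \<noteq> X r \<and> \<bar>X p - X s\<bar> \<le> \<bar>X s - xf\<bar>) \<or>
         (X p \<noteq> X r \<and> \<bar>X q - X p\<bar> \<le> \<bar>X p - xf\<bar>) \<or> (X s \<noteq> X r \<and> \<bar>X q - X s\<bar> \<le> \<bar>X s - xf\<bar>) \<or>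
         (X p \<noteq> X r \<and> \<bar>X s - X p\<bar> \<le> \<bar>X p - xf\<bar>) \<or> (X q \<noteq> X r \<and> \<bar>X s - X q\<bar> \<le> \<bar>X q - xf\<bar>)"
        apply (rule select3[OF dpos near[OF pS] near[OF qS] near[OF sS] xfclose])
        using Xpq Xsp Xsq by auto
      then show False
        using step[OF pS qS hp hq Xpq] step[OF pS sS hp hs Xsp] step[OF qS pS hq hp Xpq[symmetric]]
          step[OF qS sS hq hs Xsq] step[OF sS pS hs hp Xsp[symmetric]] step[OF sS qS hs hq Xsq[symmetric]]
        by blast
    qed
  qed
  then show ?thesis using pS qS Xpq by blast
qed

lemma alg1_gen:
  fixes Up Uq Uz Vp Vq Vz :: real
  assumes "Up \<noteq> 0" "Uq \<noteq> 0" "Uz \<noteq> 0"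
  shows "((Vq/Uq - Vp/Up) * (1/Uz - 1/Up) - (1/Uq - 1/Up) * (Vz/Uz - Vp/Up)) * (Up*Uq*Uz)
       = Vq*Up - Vq*Uz - Vp*Uq - Up*Vz + Vp*Uz + Uq*Vz"
proof -
  have "((Vq/Uq - Vp/Up) * (1/Uz - 1/Up) - (1/Uq - 1/Up) * (Vz/Uz - Vp/Up)) * (Up*Uq*Uz)
      = ((Vq*Up - Vp*Uq)*(Up - Uz) - (Up - Uq)*(Vz*Up - Vp*Uz)) / Up"
    using assms by (simp add: field_simps)
  also have "(Vq*Up - Vp*Uq)*(Up - Uz) - (Up - Uq)*(Vz*Up - Vp*Uz) = Up * (Vq*Up - Vq*Uz - Vp*Uq - Up*Vz + Vp*Uz + Uq*Vz)"
    by (simp add: algebra_simps)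
  finally show ?thesis using assms by simp
qed

lemma alg1:
  fixes ax ay px py qx qy zx zy t :: real
  assumes "(px-ax)+t*(py-ay) \<noteq> 0" "(qx-ax)+t*(qy-ay) \<noteq> 0" "(zx-ax)+t*(zy-ay) \<noteq> 0"
  shows "(((qy-ay)/((qx-ax)+t*(qy-ay)) - (py-ay)/((px-ax)+t*(py-ay))) * (1/((zx-ax)+t*(zy-ay)) - 1/((px-ax)+t*(py-ay)))
        - (1/((qx-ax)+t*(qy-ay)) - 1/((px-ax)+t*(py-ay))) * ((zy-ay)/((zx-ax)+t*(zy-ay)) - (py-ay)/((px-ax)+t*(py-ay))))
        * (((px-ax)+t*(py-ay)) * ((qx-ax)+t*(qy-ay)) * ((zx-ax)+t*(zy-ay)))
       = (qx - px)*(zy - py) - (qy - py)*(zx - px)"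
  unfolding alg1_gen[OF assms, of "qy-ay" "py-ay" "zy-ay"] by (simp add: algebra_simps)

lemma alg2:
  fixes ax ay px py qx qy t :: real
  assumes "(px-ax)+t*(py-ay) \<noteq> 0" "(qx-ax)+t*(qy-ay) \<noteq> 0"
  shows "((py-ay)/((px-ax)+t*(py-ay)) - (qy-ay)/((qx-ax)+t*(qy-ay))) * (((px-ax)+t*(py-ay)) * ((qx-ax)+t*(qy-ay)))
       = -((qx - px)*(ay - py) - (qy - py)*(ax - px))"
proof -
  define Up where "Up = (px-ax)+t*(py-ay)"
  define Uq where "Uq = (qx-ax)+t*(qy-ay)"
  have "((py-ay)/Up - (qy-ay)/Uq)*(Up*Uq) = (py-ay)*Uq - (qy-ay)*Up"
    using assms unfolding Up_def[symmetric] Uq_def[symmetric] by (simp add: field_simps)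
  also have "\<dots> = -((qx - px)*(ay - py) - (qy - py)*(ax - px))"
    unfolding Up_def Uq_def by (simp add: algebra_simps)
  finally show ?thesis unfolding Up_def Uq_def .
qed

lemma alg3:
  fixes ea eb fa fb ga gb :: real
  assumes "ea*gb - eb*ga = 0" "fa*gb - fb*ga = 0" "ea*fb - eb*fa \<noteq> 0"
  shows "ga = 0 \<and> gb = 0"
proof -
  have "ga*(ea*fb - eb*fa) = fa*(ea*gb - eb*ga) - ea*(fa*gb - fb*ga)" by (simp add: algebra_simps)
  hence 1: "ga*(ea*fb - eb*fa) = 0" using assms(1,2) by simp
  have "gb*(ea*fb - eb*fa) = fb*(ea*gb - eb*ga) - eb*(fa*gb - fb*ga)" by (simp add: algebra_simps)
  hence 2: "gb*(ea*fb - eb*fa) = 0" using assms(1,2) by simp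
  show ?thesis using 1 2 assms(3) by simp
qed


definition crossO :: "real^2 \<Rightarrow> real^2 \<Rightarrow> real^2 \<Rightarrow> real" where
  "crossO p q z = (q$1 - p$1)*(z$2 - p$2) - (q$2 - p$2)*(z$1 - p$1)"

lemma vec2_eq: fixes x y :: "real^2" shows "x = y \<longleftrightarrow> x$1 = y$1 \<and> x$2 = y$2"
  by (simp add: vec_eq_iff forall_2)

lemma hull_iff:
  fixes p q z :: "real^2" assumes pq: "p \<noteq> q"
  shows "z \<in> affine hull {p,q} \<longleftrightarrow> crossO p q z = 0"
proof
  assume "z \<in> affine hull {p,q}"
  then obtain u v where uv: "u + v = 1" "z = u *\<^sub>R p + v *\<^sub>R q" by (auto simp: affine_hull_2)
  then have "u = 1 - v" by simp
  then have "z = (1-v) *\<^sub>R p + v *\<^sub>R q" using uv by simp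
  then have z1: "z$1 = (1-v) * p$1 + v * q$1" and z2: "z$2 = (1-v) * p$2 + v * q$2" by simp_all
  show "crossO p q z = 0" unfolding crossO_def z1 z2 by (simp add: algebra_simps)
next
  assume c: "crossO p q z = 0"
  have "p$1 \<noteq> q$1 \<or> p$2 \<noteq> q$2" using pq vec2_eq by blast
  then show "z \<in> affine hull {p,q}"
  proof
    assume h0: "p$1 \<noteq> q$1"
    then have h: "q$1 - p$1 \<noteq> 0" by simp
    define v where "v = (z$1 - p$1)/(q$1-p$1)"
    have "z = (1-v) *\<^sub>R p + v *\<^sub>R q"
    proof -
      have "v * (q$1-p$1) = z$1 - p$1" unfolding v_def using h by simp
      then have 1: "z$1 = (1-v) * p$1 + v * q$1" by (simp add: algebra_simps)
      have "(q$1 - p$1)*(z$2 - p$2) = (q$2 - p$2)*(z$1 - p$1)" using c unfolding crossO_def by simp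
      then have "z$2 - p$2 = (q$2 - p$2) * v" using h unfolding v_def by (simp add: field_simps)
      then have 2: "z$2 = (1-v) * p$2 + v * q$2" by (simp add: algebra_simps)
      show ?thesis using 1 2 by (simp add: vec2_eq)
    qed
    then show ?thesis unfolding affine_hull_2 by (intro CollectI exI[of _ "1-v"] exI[of _ v]) simp
  next
    assume h0: "p$2 \<noteq> q$2"
    then have h: "q$2 - p$2 \<noteq> 0" by simp
    define v where "v = (z$2 - p$2)/(q$2-p$2)"
    have "z = (1-v) *\<^sub>R p + v *\<^sub>R q"
    proof -
      have "v * (q$2-p$2) = z$2 - p$2" unfolding v_def using h by simp
      then have 2: "z$2 = (1-v) * p$2 + v * q$2" by (simp add: algebra_simps)
      have "(q$1 - p$1)*(z$2 - p$2) = (q$2 - p$2)*(z$1 - p$1)" using c unfolding crossO_def by simp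
      then have "z$1 - p$1 = (q$1 - p$1) * v" using h unfolding v_def by (simp add: field_simps)
      then have 1: "z$1 = (1-v) * p$1 + v * q$1" by (simp add: algebra_simps)
      show ?thesis using 1 2 by (simp add: vec2_eq)
    qed
    then show ?thesis unfolding affine_hull_2 by (intro CollectI exI[of _ "1-v"] exI[of _ v]) simp
  qed
qed

lemma noncol:
  fixes S :: "(real^2) set" assumes "\<not> collinear S"
  shows "\<exists>p\<in>S. \<exists>q\<in>S. \<exists>r\<in>S. crossO p q r \<noteq> 0"
proof (rule ccontr)
  assume all: "\<not> ?thesis"
  have "collinear S"
  proof (cases "\<exists>p\<in>S. \<exists>q\<in>S. p \<noteq> q")
    case True
    then obtain p q where pq: "p\<in>S" "q\<in>S" "p \<noteq> q" by blast
    have "S \<subseteq> affine hull {p,q}" using all pq hull_iff[OF pq(3)] by blast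
    then show ?thesis using collinear_subset collinear_affine_hull_collinear collinear_2 by blast
  next
    case False
    then have "S = {} \<or> (\<exists>p. S = {p})" by blast
    then show ?thesis by auto
  qed
  then show False using assms by simp
qed
lemma hgt_eq: fixes X Y :: "'a \<Rightarrow> real"
  assumes "X p \<noteq> X q"
  shows "hgt X Y p q z = ((X q - X p)*(Y z - Y p) - (Y q - Y p)*(X z - X p)) / (X q - X p)"
proof -
  have d: "X q - X p \<noteq> 0" using assms by simp
  show ?thesis unfolding hgt_def slope_def using d by (simp add: field_simps)
qed

theorem mainTheorem20:
  fixes A :: "(real ^ 2) set" and a :: "real ^ 2"
  assumes "finite A" and "card A \<ge> 3" and "a \<in> A"
    and "\<not> collinear (A - {a})"
  shows "\<exists>L. is_line L \<and> card (L \<inter> A) = 2 \<and> a \<notin> L"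
proof -
  define A' where "A' = A - {a}"
  have finA': "finite A'" using assms(1) unfolding A'_def by simp
  define B where "B = (\<lambda>p. - (p$1 - a$1) / (p$2 - a$2)) ` A'"
  have "finite B" unfolding B_def using finA' by simp
  then obtain t where tB: "t \<notin> B" using ex_new_if_finite[OF infinite_UNIV_char_0[where 'a=real]] by blast
  define U where "U p = (p$1 - a$1) + t * (p$2 - a$2)" for p :: "real^2"
  have U0: "U p \<noteq> 0" if pA: "p \<in> A'" for p
  proof
    assume u: "U p = 0"
    have pa: "p \<noteq> a" using pA unfolding A'_def by auto
    show False
    proof (cases "p$2 = a$2")
      case True
      then have "p$1 = a$1" using u unfolding U_def by simp
      then show False using True pa vec2_eq by blast
    next
      case False
      then have "p$2 - a$2 \<noteq> 0" by simp
      then have "t = - (p$1 - a$1) / (p$2 - a$2)" using u unfolding U_def by (simp add: field_simps)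
      then have "t \<in> B" unfolding B_def using pA by blast
      then show False using tB by simp
    qed
  qed
  define X where "X p = (p$2 - a$2) / U p" for p :: "real^2"
  define Y where "Y p = 1 / U p" for p :: "real^2"
  have inj: "inj_on (\<lambda>p. (X p, Y p)) A'"
  proof (rule inj_onI)
    fix p q assume pA: "p \<in> A'" and qA: "q \<in> A'" and eq: "(X p, Y p) = (X q, Y q)"
    have "U p = U q" using eq U0[OF pA] U0[OF qA] unfolding Y_def by simp
    moreover have "p$2 - a$2 = q$2 - a$2" using eq U0[OF pA] U0[OF qA] \<open>U p = U q\<close> unfolding X_def by simp
    ultimately have "p$1 = q$1" "p$2 = q$2" unfolding U_def by simp_all
    then show "p = q" using vec2_eq by blast
  qed
  have c1: "((X q - X p)*(Y z - Y p) - (Y q - Y p)*(X z - X p)) * (U p * U q * U z) = crossO p q z"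
    if "p \<in> A'" "q \<in> A'" "z \<in> A'" for p q z
  proof -
    have u: "(x$1 - a$1) + t * (x$2 - a$2) \<noteq> 0" if "x \<in> A'" for x using U0[OF that] unfolding U_def .
    show ?thesis unfolding X_def Y_def U_def crossO_def by (rule alg1[OF u[OF that(1)] u[OF that(2)] u[OF that(3)]])
  qed
  have c2: "(X p - X q) * (U p * U q) = - crossO p q a" if "p \<in> A'" "q \<in> A'" for p q
  proof -
    have u: "(x$1 - a$1) + t * (x$2 - a$2) \<noteq> 0" if "x \<in> A'" for x using U0[OF that] unfolding U_def .
    show ?thesis unfolding X_def U_def crossO_def by (rule alg2[OF u[OF that(1)] u[OF that(2)]])
  qed
  have Xne: "X p \<noteq> X q \<longleftrightarrow> crossO p q a \<noteq> 0" if "p \<in> A'" "q \<in> A'" for p q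
    using c2[OF that] U0[OF that(1)] U0[OF that(2)] by auto
  have hgt0: "hgt X Y p q z = 0 \<longleftrightarrow> crossO p q z = 0"
    if "p \<in> A'" "q \<in> A'" "z \<in> A'" "X p \<noteq> X q" for p q z
  proof -
    have "hgt X Y p q z = ((X q - X p)*(Y z - Y p) - (Y q - Y p)*(X z - X p)) / (X q - X p)"
      by (rule hgt_eq[where X=X and Y=Y, OF that(4)])
    moreover have "X q - X p \<noteq> 0" using that(4) by simp
    moreover have "U p * U q * U z \<noteq> 0" using U0[OF that(1)] U0[OF that(2)] U0[OF that(3)] by simp
    ultimately show ?thesis using c1[OF that(1-3)] by (metis divide_eq_0_iff mult_eq_0_iff)
  qed
  obtain p q r where pqr: "p \<in> A'" "q \<in> A'" "r \<in> A'" "crossO p q r \<noteq> 0"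
    using noncol[OF assms(4)] unfolding A'_def by blast
  have ex: "\<exists>p\<in>A'. \<exists>q\<in>A'. \<exists>r\<in>A'. X p \<noteq> X q \<and> hgt X Y p q r \<noteq> 0"
  proof (cases "crossO p q a = 0 \<and> crossO p r a = 0")
    case True
    have "(a-p)$1 = 0 \<and> (a-p)$2 = 0"
      using alg3[where ea="(q-p)$1" and eb="(q-p)$2" and fa="(r-p)$1" and fb="(r-p)$2"
          and ga="(a-p)$1" and gb="(a-p)$2"] True pqr(4) unfolding crossO_def by simp
    then have "a = p" using vec2_eq by simp
    then show ?thesis using pqr(1) unfolding A'_def by simp
  next
    case False
    then have "crossO p q a \<noteq> 0 \<or> crossO p r a \<noteq> 0" by simp
    then show ?thesis
    proof
      assume "crossO p q a \<noteq> 0"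
      then have "X p \<noteq> X q" using Xne pqr by simp
      then show ?thesis using hgt0[OF pqr(1-3)] pqr by blast
    next
      assume "crossO p r a \<noteq> 0"
      then have xr: "X p \<noteq> X r" using Xne pqr by simp
      have "crossO p r q \<noteq> 0" using pqr(4) unfolding crossO_def by (simp add: algebra_simps)
      then show ?thesis using hgt0[OF pqr(1) pqr(3) pqr(2) xr] pqr xr by blast
    qed
  qed
  obtain p q where pA: "p \<in> A'" and qA: "q \<in> A'" and Xpq: "X p \<noteq> X q"
    and only: "\<forall>s\<in>A'. hgt X Y p q s = 0 \<longrightarrow> s = p \<or> s = q"
    using TL[OF finA' inj ex] by blast
  have pq: "p \<noteq> q" using Xpq by auto
  define L where "L = affine hull {p,q}"
  have line: "is_line L" unfolding is_line_def L_def using pq by blast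
  have aL: "a \<notin> L" unfolding L_def hull_iff[OF pq] using Xne[OF pA qA] Xpq by simp
  have LA: "L \<inter> A = {p,q}"
  proof
    show "{p,q} \<subseteq> L \<inter> A" using pA qA hull_inc[of p "{p,q}"] hull_inc[of q "{p,q}"]
      unfolding L_def A'_def by auto
  next
    show "L \<inter> A \<subseteq> {p,q}"
    proof
      fix z assume z: "z \<in> L \<inter> A"
      then have zA: "z \<in> A'" using aL unfolding A'_def by auto
      have "crossO p q z = 0" using z hull_iff[OF pq] unfolding L_def by simp
      then have "hgt X Y p q z = 0" using hgt0[OF pA qA zA Xpq] by simp
      then show "z \<in> {p,q}" using only zA by blast
    qed
  qed
  show ?thesis using line aL LA pq by (intro exI[of _ L]) simp
qed

end
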